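(* Let $X$ be an $n$-dimensional projective space over an arbitrary field, and let $K$ be a $k$-dimensional subspace of $X$, where $-1\le k\le\min\{\frac{n-1}{2},n-3\}$. Let $\mathcal B_K$ be a $(2,1)$-blocking set in $K$ and let $\mathcal B_{X/K}$ be a $(2,1)$-blocking set in $X/K$. Then there exist, for every point $P$ of $K$, a hyperplane $H_P$ of $X$ with $K\subseteq H_P$, such that, letting $\mathcal B_{X/P}$ be the set of lines of $X$ through $P$ contained in $H_P$ (a $(1,0)$-blocking set in $X/P$), the disjoint union $$\mathcal B:=\{T\in\mathrm{Gr}_1(X):\langle K,T\rangle\in\mathcal B_{X/K}\}\ \cup\ \bigcup_{P\in\mathrm{Gr}_0(K)}\bigl(\mathcal B_{X/P}\setminus\{\text{lines of }K\text{ through }P\}\bigr)\ \cup\ \mathcal B_K$$ is a $(2,1)$-blocking set in $X$.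
   Context: Projective dimension is used; $\mathrm{Gr}_d(Y)$ is the set of $d$-dimensional subspaces of a projective space $Y$ (points: $d=0$, lines: $d=1$). For a $k$-dimensional subspace $K$ of $X$, the quotient space $X/K$ is the projective space of dimension $\dim X-k-1$ whose $r$-dimensional subspaces are the $(r+k+1)$-dimensional subspaces of $X$ containing $K$; $\langle K,T\rangle$ (the span) is regarded as an element of $X/K$. In particular, for a point $P$, points of $X/P$ are lines of $X$ through $P$ and lines of $X/P$ are planes of $X$ through $P$. For $-1\le t\le s$, an $(s,t)$-blocking set in a projective space $Y$ is a set of $t$-dimensional subspaces of $Y$ such that every $s$-dimensional subspace of $Y$ contains at least one of them. Thus a $(2,1)$-blocking set is a set of lines meeting the condition that every plane contains one of them. *)

theory Defs
  imports "HOL-Analysis.Analysis"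
begin

text \<open>The projective space X of (projective) dimension n over a field 'f is modelled by the
vector space 'f^'m with CARD('m) = n + 1. A projective subspace of projective dimension d
is a linear subspace of vector dimension d + 1 (the empty projective subspace, d = -1,
is the zero subspace).\<close>

definition pdim :: "('f::field ^ 'm) set \<Rightarrow> int" where
  "pdim S = int (vec.dim S) - 1"

definition pspace_dim :: "('f::field ^ 'm) itself \<Rightarrow> int" where
  "pspace_dim _ = int CARD('m) - 1"

text \<open>Subspaces of the interval projective space [B, A]: the projective space A/B, whose
r-dimensional subspaces are the subspaces S of X with B \<subseteq> S \<subseteq> A and pdim S = r + pdim B + 1.
For B = {0} this is just the projective space A itself; for A = UNIV it is X/B.\<close>
definition qsubs :: "('f::field ^ 'm) set \<Rightarrow> ('f ^ 'm) set \<Rightarrow> int \<Rightarrow> ('f ^ 'm) set set" where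
  "qsubs B A r = {S. vec.subspace S \<and> B \<subseteq> S \<and> S \<subseteq> A \<and> pdim S = r + pdim B + 1}"

definition blocking_set :: "('f::field ^ 'm) set \<Rightarrow> ('f ^ 'm) set \<Rightarrow> int \<Rightarrow> int
    \<Rightarrow> ('f ^ 'm) set set \<Rightarrow> bool" where
  "blocking_set B A s t \<B> \<longleftrightarrow> \<B> \<subseteq> qsubs B A t \<and>
      (\<forall>S \<in> qsubs B A s. \<exists>T \<in> \<B>. T \<subseteq> S)"

end

theory Submission
  imports Defs
begin

lemma sub_sum_span:
  fixes S T :: "('f::field ^ 'm) set"
  assumes "vec.subspace S" "vec.subspace T"
  shows "vec.dim (vec.span (S \<union> T)) + vec.dim (S \<inter> T) = vec.dim S + vec.dim T"
proof -
  have s1: "vec.span S = S" using assms(1) by (rule vec.span_eq_iff[THEN iffD2])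
  have s2: "vec.span T = T" using assms(2) by (rule vec.span_eq_iff[THEN iffD2])
  have "vec.span (S \<union> T) = {x + y |x y. x \<in> S \<and> y \<in> T}"
    unfolding vec.span_Un s1 s2 ..
  then show ?thesis using vec.dim_sums_Int[OF assms] by simp
qed

lemma dim_zero_sp[simp]: "vec.dim ({0} :: ('f::field ^ 'm) set) = 0"
  by simp

lemma qsubs0:
  fixes S A :: "('f::field ^ 'm) set"
  shows "S \<in> qsubs {0} A r \<longleftrightarrow> vec.subspace S \<and> S \<subseteq> A \<and> int (vec.dim S) = r + 1"
  unfolding qsubs_def pdim_def by (auto simp: vec.subspace_0)

lemma qsubsK:
  fixes S K :: "('f::field ^ 'm) set"
  shows "S \<in> qsubs K UNIV r \<longleftrightarrow> vec.subspace S \<and> K \<subseteq> S \<and> int (vec.dim S) = r + int (vec.dim K) + 1"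
  unfolding qsubs_def pdim_def by auto

lemma dim1_obtain:
  fixes P :: "('f::field ^ 'm) set"
  assumes "vec.subspace P" "vec.dim P = 1"
  obtains p where "p \<noteq> 0" "P = vec.span {p}"
proof -
  obtain B where B: "B \<subseteq> P" "vec.independent B" "P \<subseteq> vec.span B" "card B = vec.dim P"
    using vec.basis_exists by blast
  then obtain p where "B = {p}" using assms(2) card_1_singletonE by metis
  moreover have "vec.span B = P" using B assms(1)
    by (metis vec.span_minimal subset_antisym)
  moreover have "p \<noteq> 0" using B \<open>B = {p}\<close> vec.dependent_zero by blast
  ultimately show ?thesis using that by blast
qed

lemma dim_span1:
  fixes p :: "'f::field ^ 'm"
  assumes "p \<noteq> 0" shows "vec.dim (vec.span {p}) = 1"
  using assms by (simp add: vec.dim_insert)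

lemma dim_span2:
  fixes p w :: "'f::field ^ 'm"
  assumes "p \<noteq> 0" "w \<notin> vec.span {p}" shows "vec.dim (vec.span {w, p}) = 2"
  using assms by (simp add: vec.dim_insert)

lemma dim_UNIV_vec: "vec.dim (UNIV :: ('f::field ^ 'm) set) = CARD('m)"
  by (simp add: card_cart_basis)

lemma beta_exists:
  fixes K :: "('f::field ^ 'm) set"
  assumes K: "vec.subspace K" and d: "2 * vec.dim K \<le> CARD('m)"
  obtains \<beta> :: "'f^'m \<Rightarrow> 'f^'m \<Rightarrow> 'f" where
    "\<And>p x y. \<beta> p (x + y) = \<beta> p x + \<beta> p y"
    "\<And>p c x. \<beta> p (c *s x) = c * \<beta> p x"
    "\<And>p q x. \<beta> (p + q) x = \<beta> p x + \<beta> q x"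
    "\<And>p c x. \<beta> (c *s p) x = c * \<beta> p x"
    "\<And>p x. p \<in> K \<Longrightarrow> x \<in> K \<Longrightarrow> \<beta> p x = 0"
    "\<And>p. p \<in> K \<Longrightarrow> p \<noteq> 0 \<Longrightarrow> \<exists>x. \<beta> p x \<noteq> 0"
proof -
  obtain B0 where B0: "B0 \<subseteq> K" "vec.independent B0" "K \<subseteq> vec.span B0" "card B0 = vec.dim K"
    by (rule vec.basis_exists)
  obtain B where B: "B0 \<subseteq> B" "vec.independent B" "UNIV \<subseteq> vec.span B"
    by (rule vec.maximal_independent_subset_extend[of B0 UNIV, OF _ B0(2)]) auto
  have finB: "finite B" using B(2) by (rule vec.finiteI_independent)
  have cardB: "card B = CARD('m)"
  proof -
    have "card B = vec.dim (UNIV :: ('f^'m) set)" by (rule vec.basis_card_eq_dim) (use B in auto)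
    then show ?thesis by (simp add: card_cart_basis)
  qed
  have fin0: "finite B0" using finB B(1) by (rule finite_subset[rotated])
  have "card B0 \<le> card (B - B0)" using card_Diff_subset[OF fin0 B(1)] cardB B0(4) d by simp
  then obtain \<sigma> where \<sigma>: "\<sigma> ` B0 \<subseteq> B - B0" "inj_on \<sigma> B0"
    using card_le_inj[OF fin0 finite_Diff[OF finB]] by blast
  define R where "R = vec.representation B"
  define \<beta> where "\<beta> p x = (\<Sum>b\<in>B0. R p b * R x (\<sigma> b))" for p x
  have inB: "v \<in> vec.span B" for v using B(3) by blast
  have Radd: "R (u+v) = (\<lambda>b. R u b + R v b)" for u v
    unfolding R_def by (rule vec.representation_add[OF B(2) inB inB])
  have Rscale: "R (c *s v) = (\<lambda>b. c * R v b)" for c v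
    unfolding R_def by (rule vec.representation_scale[OF B(2) inB])
  have RK: "R x = vec.representation B0 x" if "x \<in> K" for x
    unfolding R_def using vec.representation_extend[OF B(2) _ B(1)] that B0(3) by blast
  show ?thesis
  proof (rule that)
    show "\<beta> p (x+y) = \<beta> p x + \<beta> p y" for p x y
      unfolding \<beta>_def Radd by (simp add: distrib_left sum.distrib)
    show "\<beta> p (c *s x) = c * \<beta> p x" for p c x
      unfolding \<beta>_def Rscale by (simp add: sum_distrib_left algebra_simps)
    show "\<beta> (p+q) x = \<beta> p x + \<beta> q x" for p q x
      unfolding \<beta>_def Radd by (simp add: distrib_right sum.distrib)
    show "\<beta> (c *s p) x = c * \<beta> p x" for p c x
      unfolding \<beta>_def Rscale by (simp add: sum_distrib_left algebra_simps)
    show "\<beta> p x = 0" if "p \<in> K" "x \<in> K" for p x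
    proof -
      have "R x (\<sigma> b) = 0" if "b \<in> B0" for b
      proof -
        have "\<sigma> b \<notin> B0" using \<sigma>(1) that by blast
        then show ?thesis unfolding RK[OF \<open>x \<in> K\<close>]
          using vec.representation_ne_zero by blast
      qed
      then show ?thesis unfolding \<beta>_def by simp
    qed
    show "\<exists>x. \<beta> p x \<noteq> 0" if "p \<in> K" "p \<noteq> 0" for p
    proof -
      have "\<exists>b0\<in>B0. R p b0 \<noteq> 0"
      proof (rule ccontr)
        assume "\<not> ?thesis"
        then have z: "R p b = 0" for b
          unfolding RK[OF \<open>p \<in> K\<close>] using vec.representation_ne_zero by blast
        have "(\<Sum>b | R p b \<noteq> 0. R p b *s b) = p"
          unfolding R_def by (rule vec.sum_nonzero_representation_eq[OF B(2) inB])
        then have "p = 0" using z by simp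
        then show False using that by simp
      qed
      then obtain b0 where b0: "b0 \<in> B0" "R p b0 \<noteq> 0" by blast
      have sb: "\<sigma> b0 \<in> B" using \<sigma>(1) b0(1) by blast
      have Rs: "R (\<sigma> b0) = (\<lambda>v. if v = \<sigma> b0 then 1 else 0)"
        unfolding R_def by (rule vec.representation_basis[OF B(2) sb])
      have "\<beta> p (\<sigma> b0) = (\<Sum>b\<in>B0. if b = b0 then R p b else 0)"
        unfolding \<beta>_def Rs
      proof (rule sum.cong)
        fix b assume "b \<in> B0"
        then have "(\<sigma> b0 = \<sigma> b) = (b = b0)" using \<sigma>(2) b0(1) inj_on_eq_iff by metis
        then show "R p b * (if \<sigma> b = \<sigma> b0 then 1 else 0) = (if b = b0 then R p b else 0)" by auto
      qed simp
      also have "\<dots> = R p b0" using b0(1) fin0 by simp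
      finally show ?thesis using b0(2) by metis
    qed
  qed
qed

lemma hyperplane_dim:
  fixes f :: "'f::field ^ 'm \<Rightarrow> 'f"
  assumes add: "\<And>x y. f (x + y) = f x + f y" and sc: "\<And>c x. f (c *s x) = c * f x"
    and u: "f u \<noteq> 0"
  shows "vec.subspace {x. f x = 0}" "vec.dim {x. f x = 0} = CARD('m) - 1"
proof -
  let ?S = "{x. f x = 0}"
  have f0: "f 0 = 0" using sc[of 0 0] by simp
  show sub: "vec.subspace ?S"
    unfolding vec.subspace_def using f0 add sc by simp
  have spS: "vec.span ?S = ?S" using sub by (rule vec.span_eq_iff[THEN iffD2])
  have "u \<notin> ?S" using u by simp
  then have "vec.span ?S \<noteq> UNIV" unfolding spS by blast
  then have "vec.span ?S \<subset> vec.span (UNIV :: ('f^'m) set)" by (simp add: spS psubsetI)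
  then have "vec.dim ?S < vec.dim (UNIV :: ('f^'m) set)" by (rule vec.dim_psubset)
  then have lt: "vec.dim ?S < CARD('m)" by (simp add: card_cart_basis)
  have "UNIV \<subseteq> vec.span (insert u ?S)"
  proof
    fix x :: "'f^'m"
    define c where "c = f x / f u"
    have "f (x - c *s u) = 0"
    proof -
      have "f x = f ((x - c *s u) + c *s u)" by simp
      also have "\<dots> = f (x - c *s u) + c * f u" by (simp only: add sc)
      finally show ?thesis using u unfolding c_def by simp
    qed
    then have "x - c *s u \<in> vec.span (insert u ?S)" by (simp add: vec.span_base)
    moreover have "c *s u \<in> vec.span (insert u ?S)" by (simp add: vec.span_base vec.span_scale)
    ultimately have "(x - c *s u) + c *s u \<in> vec.span (insert u ?S)" by (rule vec.span_add)
    then show "x \<in> vec.span (insert u ?S)" by simp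
  qed
  then have "vec.dim (UNIV :: ('f^'m) set) \<le> vec.dim (vec.span (insert u ?S))"
    by (rule vec.dim_subset)
  also have "\<dots> \<le> vec.dim ?S + 1" by (simp add: vec.dim_insert)
  finally have "CARD('m) \<le> vec.dim ?S + 1" by (simp add: card_cart_basis)
  then show "vec.dim ?S = CARD('m) - 1" using lt by simp
qed

theorem theorem3p29:
  fixes K :: "('f::field ^ 'm) set" and k n :: int
    and BK BXK :: "('f ^ 'm) set set"
  assumes "n = pspace_dim TYPE('f ^ 'm)"
    and "K \<in> qsubs {0} UNIV k"
    and "-1 \<le> k" and "2 * k \<le> n - 1" and "k \<le> n - 3"
    and "blocking_set {0} K 2 1 BK"
    and "blocking_set K UNIV 2 1 BXK"
  shows "\<exists>H :: ('f ^ 'm) set \<Rightarrow> ('f ^ 'm) set.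
     (\<forall>P \<in> qsubs {0} K 0. H P \<in> qsubs {0} UNIV (n - 1) \<and> K \<subseteq> H P) \<and>
     (let BXP = (\<lambda>P. {L \<in> qsubs {0} UNIV 1. P \<subseteq> L \<and> L \<subseteq> H P});
          B1 = {T \<in> qsubs {0} UNIV 1. vec.span (K \<union> T) \<in> BXK};
          B2 = (\<lambda>P. BXP P - {L \<in> qsubs {0} K 1. P \<subseteq> L})
      in blocking_set {0} UNIV 2 1 (B1 \<union> (\<Union>P \<in> qsubs {0} K 0. B2 P) \<union> BK)
         \<and> B1 \<inter> (\<Union>P \<in> qsubs {0} K 0. B2 P) = {}
         \<and> B1 \<inter> BK = {}
         \<and> (\<Union>P \<in> qsubs {0} K 0. B2 P) \<inter> BK = {}
         \<and> (\<forall>P \<in> qsubs {0} K 0. \<forall>Q \<in> qsubs {0} K 0. P \<noteq> Q \<longrightarrow> B2 P \<inter> B2 Q = {}))"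
proof -
  have Ksub: "vec.subspace K" and dK: "int (vec.dim K) = k + 1"
    using assms(2) by (auto simp: qsubs0)
  define d where "d = vec.dim K"
  define m where "m = CARD('m)"
  have nm: "n = int m - 1" using assms(1) by (simp add: pspace_dim_def m_def)
  have dK': "int d = k + 1" using dK unfolding d_def .
  have d2: "2 * d \<le> m" "d + 3 \<le> m"
  proof -
    have "2 * int d \<le> int m" "int d + 3 \<le> int m" using assms(4,5) dK' nm by linarith+
    then show "2 * d \<le> m" "d + 3 \<le> m" by linarith+
  qed
  obtain \<beta> :: "'f^'m \<Rightarrow> 'f^'m \<Rightarrow> 'f" where
    b1: "\<And>p x y. \<beta> p (x + y) = \<beta> p x + \<beta> p y" and
    b2: "\<And>p c x. \<beta> p (c *s x) = c * \<beta> p x" and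
    b3: "\<And>p q x. \<beta> (p + q) x = \<beta> p x + \<beta> q x" and
    b4: "\<And>p c x. \<beta> (c *s p) x = c * \<beta> p x" and
    b5: "\<And>p x. p \<in> K \<Longrightarrow> x \<in> K \<Longrightarrow> \<beta> p x = 0" and
    b6: "\<And>p. p \<in> K \<Longrightarrow> p \<noteq> 0 \<Longrightarrow> \<exists>x. \<beta> p x \<noteq> 0"
  proof -
    have dd: "2 * vec.dim K \<le> CARD('m)" using d2(1) unfolding d_def m_def .
    show ?thesis by (rule beta_exists[OF Ksub dd], rule that, assumption+)
  qed
  have bdiff: "\<beta> (p - q) x = \<beta> p x - \<beta> q x" for p q x
    using b3[of "p - q" q x] by simp
  define H where "H = (\<lambda>P. {x. \<forall>y\<in>P. \<beta> y x = 0})"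
  have pt: "\<exists>p. p \<in> K \<and> p \<noteq> 0 \<and> P = vec.span {p}" if "P \<in> qsubs {0} K 0" for P
  proof -
    have "vec.subspace P" "P \<subseteq> K" "vec.dim P = 1" using that by (auto simp: qsubs0)
    then obtain p where "p \<noteq> 0" "P = vec.span {p}" using dim1_obtain by metis
    moreover have "p \<in> K" using \<open>P \<subseteq> K\<close> calculation vec.span_base by blast
    ultimately show ?thesis by blast
  qed
  have HP: "H (vec.span {p}) = {x. \<beta> p x = 0}" for p
  proof -
    have "\<beta> y x = 0" if "y \<in> range (\<lambda>c. c *s p)" "\<beta> p x = 0" for y x
      using that b4 by auto
    moreover have "p \<in> range (\<lambda>c. c *s p)" by (rule range_eqI[where x=1]) simp
    ultimately show ?thesis unfolding H_def vec.span_singleton by blast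
  qed
  have hyp: "vec.subspace {x. \<beta> p x = 0} \<and> vec.dim {x. \<beta> p x = 0} = m - 1"
    if pK: "p \<in> K" and pn: "p \<noteq> 0" for p
  proof -
    obtain u where "\<beta> p u \<noteq> 0" using b6[OF pK pn] by blast
    then show ?thesis using hyperplane_dim[of "\<beta> p", OF b1 b2] unfolding m_def by blast
  qed
  have ptK: "vec.span {r} \<in> qsubs {0} K 0" if "r \<in> K" "r \<noteq> 0" for r
    using that Ksub by (auto simp: qsubs0 dim_span1 vec.span_minimal)
  define BXP where "BXP = (\<lambda>P. {L \<in> qsubs {0} UNIV 1. P \<subseteq> L \<and> L \<subseteq> H P})"
  define B1 where "B1 = {T \<in> qsubs {0} UNIV 1. vec.span (K \<union> T) \<in> BXK}"
  define B2 where "B2 = (\<lambda>P. BXP P - {L \<in> qsubs {0} K 1. P \<subseteq> L})"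
  define Pts where "Pts = qsubs {0} K (0::int)"
  have first: "\<forall>P \<in> Pts. H P \<in> qsubs {0} UNIV (n - 1) \<and> K \<subseteq> H P"
  proof
    fix P assume "P \<in> Pts"
    then obtain p where p: "p \<in> K" "p \<noteq> 0" "P = vec.span {p}" using pt unfolding Pts_def by blast
    have e: "H P = {x. \<beta> p x = 0}" using HP p(3) by simp
    have "vec.subspace (H P) \<and> vec.dim (H P) = m - 1" using hyp[OF p(1,2)] e by simp
    moreover have "int (m - 1) = (n - 1) + 1" using nm d2 by simp
    moreover have "K \<subseteq> H P" using e b5 p(1) by auto
    ultimately show "H P \<in> qsubs {0} UNIV (n - 1) \<and> K \<subseteq> H P" by (auto simp: qsubs0)
  qed
  have BKsub: "BK \<subseteq> qsubs {0} K 1" using assms(6) unfolding blocking_set_def by blast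
  have BXKsub: "BXK \<subseteq> qsubs K UNIV 1" using assms(7) unfolding blocking_set_def by blast
  have blk: "blocking_set {0} UNIV 2 1 (B1 \<union> (\<Union>P \<in> Pts. B2 P) \<union> BK)"
    unfolding blocking_set_def
  proof (intro conjI ballI)
    show "B1 \<union> (\<Union>P\<in>Pts. B2 P) \<union> BK \<subseteq> qsubs {0} UNIV 1"
      using BKsub unfolding B1_def B2_def BXP_def by (auto simp: qsubs0)
    fix E :: "('f^'m) set" assume "E \<in> qsubs {0} UNIV 2"
    then have Esub: "vec.subspace E" and dE: "vec.dim E = 3" by (auto simp: qsubs0)
    have linegen: "\<exists>T \<in> (\<Union>P\<in>Pts. B2 P). T \<subseteq> E"
      if r: "r \<in> K" "r \<noteq> 0" "r \<in> E" and v: "v \<in> E" "v \<notin> K" "\<beta> r v = 0" for r v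
    proof -
      let ?P = "vec.span {r}" and ?T = "vec.span {v, r}"
      have Pp: "?P \<in> Pts" using ptK[OF r(1,2)] unfolding Pts_def .
      have "?P \<subseteq> K" using r(1) Ksub by (simp add: vec.span_minimal)
      then have vr: "v \<notin> vec.span {r}" using v(2) by blast
      have Tq: "?T \<in> qsubs {0} UNIV 1" using dim_span2[OF r(2) vr] by (simp add: qsubs0)
      have PT: "?P \<subseteq> ?T" by (rule vec.span_mono) blast
      have "{v, r} \<subseteq> {x. \<beta> r x = 0}" using v(3) b5[OF r(1) r(1)] by simp
      then have TH: "?T \<subseteq> H ?P" unfolding HP using hyp[OF r(1,2)] by (simp add: vec.span_minimal)
      have "v \<in> ?T" by (simp add: vec.span_base)
      then have TnK: "\<not> ?T \<subseteq> K" using v(2) by blast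
      have "?T \<in> B2 ?P" unfolding B2_def BXP_def using Tq PT TH TnK by (auto simp: qsubs0)
      moreover have "?T \<subseteq> E" using Esub r(3) v(1) by (simp add: vec.span_minimal)
      ultimately show ?thesis using Pp by blast
    qed
    let ?I = "E \<inter> K"
    have Isub: "vec.subspace ?I" using Esub Ksub by (rule vec.subspace_inter)
    have "vec.dim ?I \<le> 3" using vec.dim_subset[of ?I E] dE by auto
    then consider "vec.dim ?I = 0" | "vec.dim ?I = 1" | "vec.dim ?I = 2" | "vec.dim ?I = 3" by linarith
    then show "\<exists>T \<in> B1 \<union> (\<Union>P\<in>Pts. B2 P) \<union> BK. T \<subseteq> E"
    proof cases
      case 1
      then have I0: "?I \<subseteq> {0}" by simp
      define S0 where "S0 = vec.span (K \<union> E)"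
      have "vec.dim S0 + vec.dim (K \<inter> E) = d + 3"
        using sub_sum_span[OF Ksub Esub] dE unfolding S0_def d_def by simp
      moreover have "vec.dim (K \<inter> E) = 0" using 1 by (simp add: Int_commute)
      ultimately have dS0: "vec.dim S0 = d + 3" by simp
      have "K \<subseteq> S0" unfolding S0_def using vec.span_superset by blast
      then have S0q: "S0 \<in> qsubs K UNIV 2" unfolding qsubsK using dS0
        by (auto simp: S0_def d_def)
      obtain S where S: "S \<in> BXK" "S \<subseteq> S0" using assms(7) S0q unfolding blocking_set_def by blast
      have "S \<in> qsubs K UNIV 1" using S(1) BXKsub by blast
      then have Sq: "vec.subspace S" "K \<subseteq> S" "vec.dim S = d + 2" by (auto simp: qsubsK d_def)
      let ?T = "S \<inter> E"
      have Tsub: "vec.subspace ?T" using Sq(1) Esub by (rule vec.subspace_inter)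
      have "E \<subseteq> S0" unfolding S0_def using vec.span_superset by blast
      then have "vec.span (S \<union> E) \<subseteq> S0" using S(2) unfolding S0_def
        by (simp add: vec.span_minimal)
      then have "vec.dim (vec.span (S \<union> E)) \<le> d + 3" using dS0 vec.dim_subset by metis
      then have g2: "vec.dim ?T \<ge> 2" using sub_sum_span[OF Sq(1) Esub] Sq(3) dE by simp
      have spS: "vec.span (K \<union> ?T) \<subseteq> S" using Sq by (simp add: vec.span_minimal)
      then have l2: "vec.dim (vec.span (K \<union> ?T)) \<le> d + 2" using Sq(3) vec.dim_subset by metis
      have "K \<inter> ?T \<subseteq> {0}" using I0 by blast
      then have KT0: "vec.dim (K \<inter> ?T) = 0" by simp
      have "vec.dim (vec.span (K \<union> ?T)) = d + vec.dim ?T"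
        using sub_sum_span[OF Ksub Tsub] KT0 unfolding d_def by linarith
      then have dT: "vec.dim ?T = 2" and dKT: "vec.dim (vec.span (K \<union> ?T)) = d + 2"
        using g2 l2 by simp_all
      have "vec.span (K \<union> ?T) = S"
        using vec.subspace_dim_equal[OF vec.subspace_span Sq(1) spS] dKT Sq(3) by simp
      then have "?T \<in> B1" unfolding B1_def using Tsub dT S(1) by (simp add: qsubs0)
      then show ?thesis by blast
    next
      case 2
      obtain p where p: "p \<noteq> 0" "?I = vec.span {p}" using dim1_obtain[OF Isub 2] by metis
      have "p \<in> ?I" unfolding p(2) by (simp add: vec.span_base)
      then have pIK: "p \<in> K" "p \<in> E" by blast+
      let ?G = "E \<inter> {x. \<beta> p x = 0}"
      have hp: "vec.subspace {x. \<beta> p x = 0}" "vec.dim {x. \<beta> p x = 0} = m - 1"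
        using hyp[OF pIK(1) p(1)] by simp_all
      have "vec.dim (vec.span (E \<union> {x. \<beta> p x = 0})) \<le> vec.dim (UNIV :: ('f^'m) set)"
        by (rule vec.dim_subset) simp
      then have "vec.dim (vec.span (E \<union> {x. \<beta> p x = 0})) \<le> m"
        by (simp add: m_def card_cart_basis)
      then have G2: "vec.dim ?G \<ge> 2" using sub_sum_span[OF Esub hp(1)] dE hp(2) d2 by simp
      have "\<not> ?G \<subseteq> vec.span {p}"
      proof
        assume "?G \<subseteq> vec.span {p}"
        then have "vec.dim ?G \<le> 1" using vec.dim_subset dim_span1[OF p(1)] by metis
        then show False using G2 by simp
      qed
      then obtain w where w: "w \<in> E" "\<beta> p w = 0" "w \<notin> vec.span {p}" by blast
      have "w \<notin> K" using w(1,3) p(2) by blast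
      from linegen[OF pIK(1) p(1) pIK(2) w(1) this w(2)] show ?thesis by blast
    next
      case 3
      obtain B0 where B0: "B0 \<subseteq> ?I" "vec.independent B0" "?I \<subseteq> vec.span B0" "card B0 = vec.dim ?I"
        by (rule vec.basis_exists)
      then obtain p q where pq: "B0 = {p, q}" "p \<noteq> q" using 3 card_2_iff by metis
      have "vec.independent {p, q}" using B0(2) pq(1) by simp
      then have i2: "vec.independent {q} \<and> p \<notin> vec.span {q}"
        using pq(2) vec.independent_insert[of p "{q}"] by simp
      have indep: "p \<notin> vec.span {q}" "q \<noteq> 0" using i2 vec.dependent_zero[of "{q}"] by auto
      have pqI: "p \<in> ?I" "q \<in> ?I" using B0(1) pq by auto
      have "\<not> E \<subseteq> K"
      proof
        assume "E \<subseteq> K" then have "?I = E" by blast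
        then show False using 3 dE by simp
      qed
      then obtain v where v: "v \<in> E" "v \<notin> K" by blast
      define a where "a = \<beta> p v"
      define b where "b = \<beta> q v"
      define r where "r = (if a = 0 \<and> b = 0 then p else b *s p - a *s q)"
      have "b *s p - a *s q \<in> ?I"
        by (rule vec.subspace_diff[OF Isub vec.subspace_scale[OF Isub pqI(1)] vec.subspace_scale[OF Isub pqI(2)]])
      then have rI: "r \<in> ?I" unfolding r_def using pqI by simp
      have rv: "\<beta> r v = 0" unfolding r_def a_def b_def using bdiff b4 by (auto simp: mult.commute)
      have r0: "r \<noteq> 0"
      proof
        assume rz: "r = 0"
        show False
        proof (cases "a = 0 \<and> b = 0")
          case True then have "p = 0" using rz r_def by simp
          then show False using indep(1) vec.span_zero by auto
        next
          case False
          then have "b *s p - a *s q = 0" using rz unfolding r_def by presburger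
          then have e: "b *s p = a *s q" by simp
          show False
          proof (cases "b = 0")
            case True then have "a \<noteq> 0" using False by simp
            then have "q = 0" using e True by simp
            then show False using indep(2) by simp
          next
            case False
            have "p = (1 / b) *s (b *s p)" using False by simp
            also have "\<dots> = (a / b) *s q" using e by simp
            finally have "p \<in> vec.span {q}" by (simp add: vec.span_scale vec.span_base)
            then show False using indep(1) by simp
          qed
        qed
      qed
      have "r \<in> K" "r \<in> E" using rI by blast+
      from linegen[OF this(1) r0 this(2) v rv] show ?thesis by blast
    next
      case 4
      have "?I = E" using vec.subspace_dim_equal[OF Isub Esub] 4 dE by auto
      then have "E \<in> qsubs {0} K 2" using Esub dE by (auto simp: qsubs0)
      then obtain T where "T \<in> BK" "T \<subseteq> E" using assms(6) unfolding blocking_set_def by blast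
      then show ?thesis by blast
    qed
  qed
  have dj1: "B1 \<inter> (\<Union>P \<in> Pts. B2 P) = {}"
  proof (rule ccontr)
    assume "B1 \<inter> (\<Union>P \<in> Pts. B2 P) \<noteq> {}"
    then obtain T P where T: "T \<in> B1" "P \<in> Pts" "T \<in> B2 P" by blast
    obtain p where p: "p \<in> K" "p \<noteq> 0" "P = vec.span {p}" using pt T(2) unfolding Pts_def by blast
    have PT: "P \<subseteq> T" using T(3) unfolding B2_def BXP_def by blast
    have Tsub: "vec.subspace T" and dT: "vec.dim T = 2" using T(1) unfolding B1_def by (auto simp: qsubs0)
    have "vec.span (K \<union> T) \<in> qsubs K UNIV 1" using T(1) BXKsub unfolding B1_def by blast
    then have "vec.dim (vec.span (K \<union> T)) = vec.dim K + 2" by (simp add: qsubsK)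
    moreover note sub_sum_span[OF Ksub Tsub]
    ultimately have "vec.dim (K \<inter> T) = 0" using dT by simp
    then have "K \<inter> T \<subseteq> {0}" by simp
    moreover have "p \<in> K \<inter> T" using p PT vec.span_base by blast
    ultimately show False using p(2) by blast
  qed
  have dj2: "B1 \<inter> BK = {}"
  proof (rule ccontr)
    assume "B1 \<inter> BK \<noteq> {}"
    then obtain T where T: "T \<in> B1" "T \<in> BK" by blast
    then have "T \<in> qsubs {0} K 1" using BKsub by blast
    then have "T \<subseteq> K" by (simp add: qsubs0)
    then have "K \<union> T = K" by blast
    then have "vec.span (K \<union> T) = K" using Ksub vec.span_eq_iff by simp
    moreover have "vec.span (K \<union> T) \<in> qsubs K UNIV 1" using T(1) BXKsub unfolding B1_def by blast
    ultimately show False by (simp add: qsubsK)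
  qed
  have dj3: "(\<Union>P \<in> Pts. B2 P) \<inter> BK = {}"
    using BKsub unfolding B2_def BXP_def by blast
  have dj4: "\<forall>P \<in> Pts. \<forall>Q \<in> Pts. P \<noteq> Q \<longrightarrow> B2 P \<inter> B2 Q = {}"
  proof (intro ballI impI)
    fix P Q assume PQ: "P \<in> Pts" "Q \<in> Pts" "P \<noteq> Q"
    show "B2 P \<inter> B2 Q = {}"
    proof (rule ccontr)
      assume "B2 P \<inter> B2 Q \<noteq> {}"
      then obtain L where L: "L \<in> B2 P" "L \<in> B2 Q" by blast
      obtain p where p: "p \<in> K" "p \<noteq> 0" "P = vec.span {p}" using pt PQ(1) unfolding Pts_def by blast
      obtain q where q: "q \<in> K" "q \<noteq> 0" "Q = vec.span {q}" using pt PQ(2) unfolding Pts_def by blast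
      have Lq: "L \<in> qsubs {0} UNIV 1" "P \<subseteq> L" "Q \<subseteq> L" using L unfolding B2_def BXP_def by auto
      have LnK: "\<not> L \<subseteq> K" using L(1) Lq(1,2) unfolding B2_def by (auto simp: qsubs0)
      have Lsub: "vec.subspace L" and dL: "vec.dim L = 2" using Lq(1) by (auto simp: qsubs0)
      have qp: "q \<notin> vec.span {p}"
      proof
        assume "q \<in> vec.span {p}"
        then have "vec.span {q} \<subseteq> vec.span {p}" by (simp add: vec.span_minimal vec.subspace_span)
        then have "vec.span {q} = vec.span {p}"
          using vec.subspace_dim_equal[OF vec.subspace_span vec.subspace_span] dim_span1 p(2) q(2)
          by (metis order_refl)
        then show False using PQ(3) p(3) q(3) by simp
      qed
      have "p \<in> L" "q \<in> L" using Lq p(3) q(3) vec.span_base by blast+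
      then have sL: "vec.span {q, p} \<subseteq> L" using Lsub by (simp add: vec.span_minimal)
      have "vec.span {q, p} = L"
        using vec.subspace_dim_equal[OF vec.subspace_span Lsub sL] dim_span2[OF p(2) qp] dL by simp
      moreover have "vec.span {q, p} \<subseteq> K" using p(1) q(1) Ksub by (simp add: vec.span_minimal)
      ultimately show False using LnK by simp
    qed
  qed
  note ff = first[unfolded Pts_def] blk[unfolded B1_def B2_def BXP_def Pts_def]
    dj1[unfolded B1_def B2_def BXP_def Pts_def] dj2[unfolded B1_def]
    dj3[unfolded B2_def BXP_def Pts_def] dj4[unfolded B2_def BXP_def Pts_def]
  show ?thesis
    apply (rule exI[where x=H])
    unfolding Let_def
    apply (intro conjI)
         apply (fact ff(1))
        apply (fact ff(2))
       apply (fact ff(3))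
      apply (fact ff(4))
     apply (fact ff(5))
    apply (fact ff(6))
    done
qed

end
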